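(* Let $V$ be a finite set, $\{\eta(t),t\ge0\}$ a consistent configuration process on $\Omega$, and $\mathbf x=(x_1,\dots,x_n)\in V_n$. Then for all $v\in V$ and $t\ge0$, $$\mathbb E_{\phi(\mathbf x)}[\eta_v(t)]=\sum_{j=1}^n\mathbf P_{x_j}\big(X^{\mathrm{rw}}(t)=v\big),$$ where $\mathbf P_u$ is the law of the random walk $X^{\mathrm{rw}}$ associated to $\{\eta(t)\}$ started at $u$.
   Context: $\Lambda\subseteq\mathbb N_0$; $\Omega_n=\{\eta\in\Lambda^V:\sum_x\eta_x=n\}$, $\Omega=\bigcup_n\Omega_n$; $\phi(\mathbf y)=\sum_i\delta_{y_i}$; $V_n=\{\mathbf x\in V^n:\phi(\mathbf x)\in\Omega_n\}$. A configuration process is a particle-number-conserving Markov process on $\Omega$ with generator $\mathcal L$; it is consistent if $[\mathcal L,\mathcal A]=0$, where $\mathcal Af(\eta)=\sum_{x}\eta_xf(\eta-\delta_x)$ (terms with $\eta_x=0$ vanish). The associated random walk $\{X^{\mathrm{rw}}(t)\}$ on $V$ is defined by: when $\eta(0)=\delta_u$, then $\eta(t)=\delta_{X^{\mathrm{rw}}(t)}$ with $X^{\mathrm{rw}}(0)=u$ (i.e. it is the motion of a single particle). *)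

theory Defs
  imports "HOL-Analysis.Analysis"
begin

definition delta :: "'v \<Rightarrow> 'v \<Rightarrow> nat" where
  "delta u = (\<lambda>y. if y = u then 1 else 0)"

definition Omega :: "nat set \<Rightarrow> ('v::finite \<Rightarrow> nat) set" where
  "Omega Lam = {\<eta>. \<forall>x. \<eta> x \<in> Lam}"

definition npart :: "('v::finite \<Rightarrow> nat) \<Rightarrow> nat" where
  "npart \<eta> = (\<Sum>x\<in>UNIV. \<eta> x)"

definition Omega_n :: "nat set \<Rightarrow> nat \<Rightarrow> ('v::finite \<Rightarrow> nat) set" where
  "Omega_n Lam n = {\<eta> \<in> Omega Lam. npart \<eta> = n}"

text \<open>phi(y_1,...,y_n) = sum_i delta_{y_i}\<close>
definition phi :: "'v list \<Rightarrow> 'v \<Rightarrow> nat" where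
  "phi ys = (\<lambda>v. length (filter (\<lambda>y. y = v) ys))"

definition gen :: "nat set \<Rightarrow> (('v::finite \<Rightarrow> nat) \<Rightarrow> ('v \<Rightarrow> nat) \<Rightarrow> real)
    \<Rightarrow> (('v \<Rightarrow> nat) \<Rightarrow> real) \<Rightarrow> ('v \<Rightarrow> nat) \<Rightarrow> real" where
  "gen Lam q f \<eta> = (\<Sum>\<xi>\<in>Omega_n Lam (npart \<eta>). q \<eta> \<xi> * (f \<xi> - f \<eta>))"

definition is_config_process :: "nat set \<Rightarrow> (('v::finite \<Rightarrow> nat) \<Rightarrow> ('v \<Rightarrow> nat) \<Rightarrow> real) \<Rightarrow> bool" where
  "is_config_process Lam q \<longleftrightarrow>
     (\<forall>\<eta>\<in>Omega Lam. \<forall>\<xi>\<in>Omega Lam. \<xi> \<noteq> \<eta> \<longrightarrow> q \<eta> \<xi> \<ge> 0)"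

definition annih :: "(('v::finite \<Rightarrow> nat) \<Rightarrow> real) \<Rightarrow> ('v \<Rightarrow> nat) \<Rightarrow> real" where
  "annih f \<eta> = (\<Sum>x\<in>UNIV. real (\<eta> x) * f (\<lambda>y. \<eta> y - delta x y))"

definition consistent :: "nat set \<Rightarrow> (('v::finite \<Rightarrow> nat) \<Rightarrow> ('v \<Rightarrow> nat) \<Rightarrow> real) \<Rightarrow> bool" where
  "consistent Lam q \<longleftrightarrow>
     (\<forall>f. \<forall>\<eta>\<in>Omega Lam. gen Lam q (annih f) \<eta> = annih (gen Lam q f) \<eta>)"

text \<open>Expectation E_eta[f(eta(t))] = (e^{tL} f)(eta); on each finite Omega_n the
  process is a finite-state continuous-time Markov chain, whose semigroup is the
  exponential of its generator.\<close>
definition expect :: "nat set \<Rightarrow> (('v::finite \<Rightarrow> nat) \<Rightarrow> ('v \<Rightarrow> nat) \<Rightarrow> real)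
    \<Rightarrow> real \<Rightarrow> (('v \<Rightarrow> nat) \<Rightarrow> real) \<Rightarrow> ('v \<Rightarrow> nat) \<Rightarrow> real" where
  "expect Lam q t f \<eta> = (\<Sum>k. t ^ k / fact k * ((gen Lam q ^^ k) f) \<eta>)"

text \<open>P_u(X^rw(t) = v): single particle started at u is at v at time t.\<close>
definition rw_prob :: "nat set \<Rightarrow> (('v::finite \<Rightarrow> nat) \<Rightarrow> ('v \<Rightarrow> nat) \<Rightarrow> real)
    \<Rightarrow> real \<Rightarrow> 'v \<Rightarrow> 'v \<Rightarrow> real" where
  "rw_prob Lam q t u v = expect Lam q t (\<lambda>\<eta>. if \<eta> = delta v then 1 else 0) (delta u)"

end

theory Submission
  imports Defs
begin

lemma finite_Omega_n: "finite (Omega_n Lam m :: ('v::finite \<Rightarrow> nat) set)"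
proof -
  have "Omega_n Lam m \<subseteq> PiE (UNIV::'v set) (\<lambda>_. {..m})"
  proof
    fix \<eta> :: "'v \<Rightarrow> nat" assume "\<eta> \<in> Omega_n Lam m"
    hence "npart \<eta> = m" by (simp add: Omega_n_def)
    moreover have "\<eta> x \<le> sum \<eta> UNIV" for x by (rule member_le_sum) auto
    ultimately have "\<forall>x. \<eta> x \<le> m" unfolding npart_def by auto
    thus "\<eta> \<in> PiE UNIV (\<lambda>_. {..m})" by auto
  qed
  moreover have "finite (PiE (UNIV::'v set) (\<lambda>_. {..m}))"
    by (rule finite_PiE) auto
  ultimately show ?thesis by (rule finite_subset)
qed

lemma gen_cong:
  assumes "\<forall>\<xi>\<in>Omega_n Lam (npart \<eta>). h1 \<xi> = h2 \<xi>" and "h1 \<eta> = h2 \<eta>"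
  shows "gen Lam q h1 \<eta> = gen Lam q h2 \<eta>"
  unfolding gen_def using assms by (intro sum.cong) auto

lemma genpow_local:
  assumes "\<forall>\<xi>\<in>Omega_n Lam m. h1 \<xi> = h2 \<xi>"
  shows "\<eta> \<in> Omega_n Lam m \<Longrightarrow> (gen Lam q ^^ k) h1 \<eta> = (gen Lam q ^^ k) h2 \<eta>"
proof (induction k arbitrary: \<eta>)
  case 0 then show ?case using assms by simp
next
  case (Suc k)
  have "npart \<eta> = m" using Suc.prems by (simp add: Omega_n_def)
  then show ?case using Suc by (simp add: gen_cong)
qed

lemma gen_scale:
  "gen Lam q (\<lambda>\<eta>. c * h \<eta>) = (\<lambda>\<eta>. c * gen Lam q h \<eta>)"
  by (rule ext) (simp add: gen_def sum_distrib_left algebra_simps)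

lemma genpow_scale:
  "(gen Lam q ^^ k) (\<lambda>\<eta>. c * h \<eta>) = (\<lambda>\<eta>. c * (gen Lam q ^^ k) h \<eta>)"
proof (induction k)
  case 0 then show ?case by simp
next
  case (Suc k)
  show ?case by (simp add: Suc gen_scale)
qed

lemma genpow_zero: "(gen Lam q ^^ k) (\<lambda>\<eta>. 0) = (\<lambda>\<eta>. 0)"
  by (induction k) (simp_all add: gen_def)

lemma genpow_bound:
  fixes h :: "('v::finite \<Rightarrow> nat) \<Rightarrow> real" and Lam :: "nat set" and m :: nat
    and q :: "('v \<Rightarrow> nat) \<Rightarrow> ('v \<Rightarrow> nat) \<Rightarrow> real"
  defines "S \<equiv> Omega_n Lam m"
  defines "Q \<equiv> (\<Sum>\<eta>\<in>S. \<Sum>\<xi>\<in>S. \<bar>q \<eta> \<xi>\<bar>)"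
  defines "B \<equiv> (\<Sum>\<zeta>\<in>S. \<bar>h \<zeta>\<bar>)"
  shows "\<eta> \<in> S \<Longrightarrow> \<bar>(gen Lam q ^^ k) h \<eta>\<bar> \<le> (2*Q)^k * B"
proof (induction k arbitrary: \<eta>)
  have fin: "finite S" unfolding S_def by (rule finite_Omega_n)
  case 0 then show ?case unfolding B_def
    using member_le_sum[OF 0 _ fin, of "\<lambda>\<zeta>. \<bar>h \<zeta>\<bar>"] by simp
next
  case (Suc k)
  have fin: "finite S" unfolding S_def by (rule finite_Omega_n)
  let ?g = "(gen Lam q ^^ k) h"
  have np: "Omega_n Lam (npart \<eta>) = S" using Suc.prems by (simp add: S_def Omega_n_def)
  have "\<bar>(gen Lam q ^^ Suc k) h \<eta>\<bar> = \<bar>\<Sum>\<xi>\<in>S. q \<eta> \<xi> * (?g \<xi> - ?g \<eta>)\<bar>"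
    by (simp add: gen_def np)
  also have "\<dots> \<le> (\<Sum>\<xi>\<in>S. \<bar>q \<eta> \<xi> * (?g \<xi> - ?g \<eta>)\<bar>)" by (rule sum_abs)
  also have "\<dots> \<le> (\<Sum>\<xi>\<in>S. \<bar>q \<eta> \<xi>\<bar> * (2 * ((2*Q)^k * B)))"
  proof (rule sum_mono)
    fix \<xi> assume "\<xi> \<in> S"
    have "\<bar>?g \<xi> - ?g \<eta>\<bar> \<le> 2 * ((2*Q)^k * B)"
      using Suc.IH[OF \<open>\<xi> \<in> S\<close>] Suc.IH[OF Suc.prems] by linarith
    then show "\<bar>q \<eta> \<xi> * (?g \<xi> - ?g \<eta>)\<bar> \<le> \<bar>q \<eta> \<xi>\<bar> * (2 * ((2*Q)^k * B))"
      by (simp add: abs_mult mult_left_mono)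
  qed
  also have "\<dots> = (\<Sum>\<xi>\<in>S. \<bar>q \<eta> \<xi>\<bar>) * (2 * ((2*Q)^k * B))"
    by (simp add: sum_distrib_right)
  also have "\<dots> \<le> Q * (2 * ((2*Q)^k * B))"
  proof (rule mult_right_mono)
    show "(\<Sum>\<xi>\<in>S. \<bar>q \<eta> \<xi>\<bar>) \<le> Q" unfolding Q_def
      using member_le_sum[OF Suc.prems _ fin, of "\<lambda>\<eta>. \<Sum>\<xi>\<in>S. \<bar>q \<eta> \<xi>\<bar>"]
      by (simp add: sum_nonneg)
    have "0 \<le> Q" unfolding Q_def by (simp add: sum_nonneg)
    moreover have "0 \<le> B" unfolding B_def by (simp add: sum_nonneg)
    ultimately show "0 \<le> 2 * ((2*Q)^k * B)" by simp
  qed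
  also have "\<dots> = (2*Q)^Suc k * B" by simp
  finally show ?case .
qed

lemma genpow_summable:
  fixes h :: "('v::finite \<Rightarrow> nat) \<Rightarrow> real"
  assumes "\<eta> \<in> Omega_n Lam m"
  shows "summable (\<lambda>k. t ^ k / fact k * (gen Lam q ^^ k) h \<eta>)"
proof -
  define Q where "Q = (\<Sum>\<eta>\<in>Omega_n Lam m. \<Sum>\<xi>\<in>Omega_n Lam m. \<bar>q \<eta> \<xi>\<bar>)"
  define B where "B = (\<Sum>\<zeta>\<in>Omega_n Lam m. \<bar>h \<zeta>\<bar>)"
  have bd: "\<And>k. \<bar>(gen Lam q ^^ k) h \<eta>\<bar> \<le> (2*Q)^k * B"
    using genpow_bound[OF assms] unfolding Q_def B_def by blast
  have "summable (\<lambda>k. B * (inverse (fact k) * (\<bar>t\<bar> * (2*Q))^k))"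
    by (intro summable_mult summable_exp)
  then show ?thesis
  proof (rule summable_comparison_test[rotated])
    show "\<exists>N. \<forall>n\<ge>N. norm (t ^ n / fact n * (gen Lam q ^^ n) h \<eta>)
        \<le> B * (inverse (fact n) * (\<bar>t\<bar> * (2*Q))^n)"
    proof (intro exI allI impI)
      fix n :: nat
      have "norm (t ^ n / fact n * (gen Lam q ^^ n) h \<eta>)
          = \<bar>t\<bar>^n / fact n * \<bar>(gen Lam q ^^ n) h \<eta>\<bar>"
        by (simp add: abs_mult power_abs)
      also have "\<dots> \<le> \<bar>t\<bar>^n / fact n * ((2*Q)^n * B)"
        by (intro mult_left_mono bd) simp
      also have "\<dots> = B * (inverse (fact n) * (\<bar>t\<bar> * (2*Q))^n)"
        by (simp add: power_mult_distrib field_simps)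
      finally show "norm (t ^ n / fact n * (gen Lam q ^^ n) h \<eta>)
        \<le> B * (inverse (fact n) * (\<bar>t\<bar> * (2*Q))^n)" .
    qed
  qed
qed

lemma delta_eq: "delta y = delta v \<longleftrightarrow> y = v"
  unfolding delta_def by (metis one_neq_zero)

lemma npart_delta: "npart (delta u :: 'v::finite \<Rightarrow> nat) = 1"
  by (simp add: npart_def delta_def)

lemma sum_delta_real: "(\<Sum>y\<in>UNIV. real (delta u y) * G y) = G (u::'v::finite)"
proof -
  have "(\<Sum>y\<in>UNIV. real (delta u y) * G y) = (\<Sum>y\<in>UNIV. if y = u then G y else 0)"
    by (rule sum.cong) (auto simp: delta_def)
  thus ?thesis by simp
qed

lemma npart_one:
  fixes \<eta> :: "'v::finite \<Rightarrow> nat"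
  assumes "npart \<eta> = 1" shows "\<eta> = delta y0 \<or> (\<exists>y. \<eta> = delta y)"
proof -
  obtain y where y: "\<eta> y \<noteq> 0"
    using assms unfolding npart_def by (metis sum.neutral zero_neq_one)
  have split: "npart \<eta> = \<eta> y + (\<Sum>x\<in>UNIV - {y}. \<eta> x)"
    unfolding npart_def by (simp add: sum.remove)
  have e: "\<eta> y + (\<Sum>x\<in>UNIV - {y}. \<eta> x) = 1" using split assms by simp
  hence "\<eta> y = 1" and rest: "(\<Sum>x\<in>UNIV - {y}. \<eta> x) = 0" using y by arith+
  have "\<forall>x\<in>UNIV - {y}. \<eta> x = 0" using rest by (subst (asm) sum_eq_0_iff) auto
  hence "\<forall>x. x \<noteq> y \<longrightarrow> \<eta> x = 0" by blast
  hence "\<eta> = delta y" using \<open>\<eta> y = 1\<close> unfolding delta_def by auto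
  thus ?thesis by blast
qed

lemma annih_cong:
  assumes "\<And>x. \<eta> x > 0 \<Longrightarrow> f1 (\<lambda>y. \<eta> y - delta x y) = f2 (\<lambda>y. \<eta> y - delta x y)"
  shows "annih f1 \<eta> = annih f2 \<eta>"
  unfolding annih_def
proof (rule sum.cong)
  fix x show "real (\<eta> x) * f1 (\<lambda>y. \<eta> y - delta x y) = real (\<eta> x) * f2 (\<lambda>y. \<eta> y - delta x y)"
    using assms[of x] by (cases "\<eta> x = 0") auto
qed simp

lemma npart_minus:
  fixes \<eta> :: "'v::finite \<Rightarrow> nat"
  assumes "\<eta> x > 0" shows "npart (\<lambda>y. \<eta> y - delta x y) = npart \<eta> - 1"
proof -
  have "(\<Sum>y\<in>UNIV. \<eta> y - delta x y) = (\<Sum>y\<in>UNIV. \<eta> y) - (\<Sum>y\<in>UNIV. delta x y)"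
    by (rule sum_subtractf_nat) (use assms in \<open>auto simp: delta_def\<close>)
  thus ?thesis by (simp add: npart_def delta_def)
qed

lemma annih_pow:
  fixes \<eta> :: "'v::finite \<Rightarrow> nat"
  shows "npart \<eta> = Suc m \<Longrightarrow>
    (annih ^^ m) h \<eta> = fact m * (\<Sum>y\<in>UNIV. real (\<eta> y) * h (delta y))"
proof (induction m arbitrary: \<eta>)
  case 0
  then obtain y where "\<eta> = delta y" using npart_one[of \<eta> undefined] by auto
  then show ?case by (simp add: sum_delta_real)
next
  case (Suc m)
  let ?H = "\<lambda>y. h (delta y)"
  have "(annih ^^ Suc m) h \<eta> = (\<Sum>x\<in>UNIV. real (\<eta> x) * (annih ^^ m) h (\<lambda>y. \<eta> y - delta x y))"
    by (simp add: annih_def)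
  also have "\<dots> = (\<Sum>x\<in>UNIV. real (\<eta> x) * (fact m * (\<Sum>y\<in>UNIV. (real (\<eta> y) - (if x = y then 1 else 0)) * ?H y)))"
  proof (rule sum.cong)
    fix x
    show "real (\<eta> x) * (annih ^^ m) h (\<lambda>y. \<eta> y - delta x y) =
      real (\<eta> x) * (fact m * (\<Sum>y\<in>UNIV. (real (\<eta> y) - (if x = y then 1 else 0)) * ?H y))"
    proof (cases "\<eta> x = 0")
      case False
      have np: "npart (\<lambda>y. \<eta> y - delta x y) = Suc m" using npart_minus[of \<eta> x] False Suc.prems by simp
      have "(\<Sum>y\<in>UNIV. real (\<eta> y - delta x y) * ?H y) = (\<Sum>y\<in>UNIV. (real (\<eta> y) - (if x = y then 1 else 0)) * ?H y)"
        by (rule sum.cong) (use False in \<open>auto simp: delta_def of_nat_diff\<close>)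
      then show ?thesis using Suc.IH[OF np] by simp
    qed simp
  qed simp
  also have "\<dots> = fact m * ((\<Sum>x\<in>UNIV. real (\<eta> x)) * (\<Sum>y\<in>UNIV. real (\<eta> y) * ?H y) - (\<Sum>x\<in>UNIV. real (\<eta> x) * ?H x))"
  proof -
    have "(\<Sum>y\<in>UNIV. (real (\<eta> y) - (if x = y then 1 else 0)) * ?H y) = (\<Sum>y\<in>UNIV. real (\<eta> y) * ?H y) - ?H x" for x
    proof -
      have "(\<Sum>y\<in>UNIV. (real (\<eta> y) - (if x = y then 1 else 0)) * ?H y)
          = (\<Sum>y\<in>UNIV. real (\<eta> y) * ?H y - (if x = y then ?H y else 0))"
        by (rule sum.cong) (auto simp: algebra_simps)
      also have "\<dots> = (\<Sum>y\<in>UNIV. real (\<eta> y) * ?H y) - (\<Sum>y\<in>UNIV. if x = y then ?H y else 0)"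
        by (rule sum_subtractf)
      finally show ?thesis by simp
    qed
    then have "(\<Sum>x\<in>UNIV. real (\<eta> x) * (fact m * (\<Sum>y\<in>UNIV. (real (\<eta> y) - (if x = y then 1 else 0)) * ?H y)))
        = (\<Sum>x\<in>UNIV. (fact m * (\<Sum>y\<in>UNIV. real (\<eta> y) * ?H y)) * real (\<eta> x) - fact m * (real (\<eta> x) * ?H x))"
      by (intro sum.cong) (simp_all add: right_diff_distrib)
    also have "\<dots> = (fact m * (\<Sum>y\<in>UNIV. real (\<eta> y) * ?H y)) * (\<Sum>x\<in>UNIV. real (\<eta> x)) - fact m * (\<Sum>x\<in>UNIV. real (\<eta> x) * ?H x)"
      by (simp only: sum_subtractf sum_distrib_left)
    finally show ?thesis by (simp only: right_diff_distrib mult_ac)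
  qed
  moreover have "(\<Sum>x\<in>UNIV. real (\<eta> x)) = real (Suc (Suc m))"
    using Suc.prems unfolding npart_def by (metis of_nat_sum)
  ultimately have "(annih ^^ Suc m) h \<eta> = fact m * (real (Suc (Suc m)) * (\<Sum>y\<in>UNIV. real (\<eta> y) * ?H y) - (\<Sum>x\<in>UNIV. real (\<eta> x) * ?H x))"
    by simp
  also have "\<dots> = (fact m * real (Suc m)) * (\<Sum>y\<in>UNIV. real (\<eta> y) * ?H y)"
    by (simp only: of_nat_Suc) (simp add: algebra_simps)
  also have "fact m * real (Suc m) = fact (Suc m)" by simp
  finally show ?case .
qed

lemma comm1:
  assumes cons: "consistent Lam q"
  shows "\<forall>f. \<forall>\<eta>\<in>Omega Lam. (gen Lam q ^^ k) (annih f) \<eta> = annih ((gen Lam q ^^ k) f) \<eta>"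
proof (induction k)
  case 0 then show ?case by simp
next
  case (Suc k)
  show ?case
  proof (intro allI ballI)
    fix f and \<eta> :: "'a \<Rightarrow> nat" assume e: "\<eta> \<in> Omega Lam"
    have IH': "\<And>\<xi>. \<xi> \<in> Omega Lam \<Longrightarrow> (gen Lam q ^^ k) (annih f) \<xi> = annih ((gen Lam q ^^ k) f) \<xi>"
      using Suc.IH by simp
    have all: "\<forall>\<xi>\<in>Omega_n Lam (npart \<eta>). (gen Lam q ^^ k) (annih f) \<xi> = annih ((gen Lam q ^^ k) f) \<xi>"
      using IH' by (simp add: Omega_n_def)
    have "(gen Lam q ^^ Suc k) (annih f) \<eta> = gen Lam q ((gen Lam q ^^ k) (annih f)) \<eta>" by simp
    also have "\<dots> = gen Lam q (annih ((gen Lam q ^^ k) f)) \<eta>"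
      by (rule gen_cong[OF all IH'[OF e]])
    also have "\<dots> = annih (gen Lam q ((gen Lam q ^^ k) f)) \<eta>"
    proof -
      have "\<forall>f. \<forall>\<eta>\<in>Omega Lam. gen Lam q (annih f) \<eta> = annih (gen Lam q f) \<eta>"
        using cons unfolding consistent_def .
      then show ?thesis using e by simp
    qed
    finally show "(gen Lam q ^^ Suc k) (annih f) \<eta> = annih ((gen Lam q ^^ Suc k) f) \<eta>" by simp
  qed
qed

lemma comm2:
  assumes cons: "consistent Lam q"
    and Lam_down: "\<And>k j. k \<in> Lam \<Longrightarrow> j \<le> k \<Longrightarrow> j \<in> Lam"
  shows "\<eta> \<in> Omega Lam \<Longrightarrow> (gen Lam q ^^ k) ((annih ^^ j) h) \<eta> = (annih ^^ j) ((gen Lam q ^^ k) h) \<eta>"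
proof (induction j arbitrary: \<eta>)
  case 0 then show ?case by simp
next
  case (Suc j)
  have "(gen Lam q ^^ k) ((annih ^^ Suc j) h) \<eta> = annih ((gen Lam q ^^ k) ((annih ^^ j) h)) \<eta>"
    using comm1[OF cons, of k] Suc.prems by simp
  also have "\<dots> = annih ((annih ^^ j) ((gen Lam q ^^ k) h)) \<eta>"
  proof (rule annih_cong)
    fix x
    have "(\<lambda>y. \<eta> y - delta x y) \<in> Omega Lam"
    proof -
      have "\<forall>y. \<eta> y \<in> Lam" using Suc.prems by (simp add: Omega_def)
      then show ?thesis unfolding Omega_def using Lam_down[OF _ diff_le_self] by blast
    qed
    then show "(gen Lam q ^^ k) ((annih ^^ j) h) (\<lambda>y. \<eta> y - delta x y) =
      (annih ^^ j) ((gen Lam q ^^ k) h) (\<lambda>y. \<eta> y - delta x y)" by (rule Suc.IH)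
  qed
  finally show ?case by simp
qed

lemma phi_sum:
  fixes xs :: "'v::finite list"
  shows "(\<Sum>y\<in>UNIV. real (phi xs y) * G y) = (\<Sum>j<length xs. G (xs ! j))"
proof (induction xs)
  case Nil then show ?case by (simp add: phi_def)
next
  case (Cons a xs)
  have "(\<Sum>y\<in>UNIV. real (phi (a # xs) y) * G y) = (\<Sum>y\<in>UNIV. (if a = y then G y else 0) + real (phi xs y) * G y)"
  proof (rule sum.cong)
    fix y
    have "phi (a # xs) y = (if a = y then 1 else 0) + phi xs y" by (simp add: phi_def)
    then show "real (phi (a # xs) y) * G y = (if a = y then G y else 0) + real (phi xs y) * G y"
      by (simp add: distrib_right)
  qed simp
  also have "\<dots> = G a + (\<Sum>y\<in>UNIV. real (phi xs y) * G y)"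
    by (simp add: sum.distrib sum.delta')
  moreover have "(\<Sum>j<length (a#xs). G ((a#xs) ! j)) = G a + (\<Sum>j<length xs. G (xs ! j))"
    by (simp only: length_Cons sum.lessThan_Suc_shift nth_Cons_0 nth_Cons_Suc)
  ultimately show ?case using Cons.IH by simp
qed

theorem corollary3p10:
  fixes Lam :: "nat set"
    and q :: "('v::finite \<Rightarrow> nat) \<Rightarrow> ('v \<Rightarrow> nat) \<Rightarrow> real"
    and xs :: "'v list"
  assumes Lam_down: "\<And>k j. k \<in> Lam \<Longrightarrow> j \<le> k \<Longrightarrow> j \<in> Lam"
    and proc: "is_config_process Lam q"
    and cons: "consistent Lam q"
    and xs_in: "phi xs \<in> Omega_n Lam (length xs)"
  shows "\<forall>v t. t \<ge> 0 \<longrightarrow>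
           expect Lam q t (\<lambda>\<eta>. real (\<eta> v)) (phi xs)
             = (\<Sum>j<length xs. rw_prob Lam q t (xs ! j) v)"
proof (intro allI impI)
  fix v :: 'v and t :: real assume "t \<ge> 0"
  define g where "g = (\<lambda>\<eta>::'v\<Rightarrow>nat. if \<eta> = delta v then (1::real) else 0)"
  have rw: "rw_prob Lam q t u v = (\<Sum>k. t^k / fact k * (gen Lam q ^^ k) g (delta u))" for u
    by (simp add: rw_prob_def expect_def g_def)
  show "expect Lam q t (\<lambda>\<eta>. real (\<eta> v)) (phi xs) = (\<Sum>j<length xs. rw_prob Lam q t (xs ! j) v)"
  proof (cases xs)
    case Nil
    have z: "phi xs = (\<lambda>_. 0)" using Nil by (intro ext) (simp add: phi_def)
    have zin: "(\<lambda>_::'v. 0::nat) \<in> Omega_n Lam 0" using xs_in z Nil by simp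
    have ag: "\<forall>\<xi>\<in>Omega_n Lam 0. real (\<xi> v) = (\<lambda>_. 0::real) \<xi>"
    proof
      fix \<xi> :: "'v \<Rightarrow> nat" assume "\<xi> \<in> Omega_n Lam 0"
      hence "npart \<xi> = 0" by (simp add: Omega_n_def)
      moreover have "\<xi> v \<le> npart \<xi>" unfolding npart_def by (rule member_le_sum) auto
      ultimately show "real (\<xi> v) = (\<lambda>_. 0::real) \<xi>" by simp
    qed
    have "(gen Lam q ^^ k) (\<lambda>\<eta>. real (\<eta> v)) (phi xs) = 0" for k
      using genpow_local[OF ag zin, where q=q and k=k] genpow_zero[where Lam=Lam and q=q and k=k] z by simp
    then show ?thesis using Nil by (simp add: expect_def)
  next
    case (Cons a ys)
    define m where "m = length ys"
    have len: "length xs = Suc m" using Cons m_def by simp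
    have e0: "phi xs \<in> Omega_n Lam (Suc m)" using xs_in len by simp
    have e0O: "phi xs \<in> Omega Lam" and np0: "npart (phi xs) = Suc m"
      using e0 by (simp_all add: Omega_n_def)
    have "phi xs a \<in> Lam" using e0O by (simp add: Omega_def)
    moreover have "phi xs a \<ge> 1" using Cons by (simp add: phi_def)
    ultimately have L1: "1 \<in> Lam" and L0: "0 \<in> Lam" using Lam_down by blast+
    have din: "delta u \<in> Omega_n Lam 1" for u
      using L1 L0 npart_delta[of u] by (simp add: Omega_n_def Omega_def delta_def)
    have gd: "(\<Sum>y\<in>UNIV. real (\<xi> y) * g (delta y)) = real (\<xi> v)" for \<xi> :: "'v \<Rightarrow> nat"
    proof -
      have "(\<Sum>y\<in>UNIV. real (\<xi> y) * g (delta y)) = (\<Sum>y\<in>UNIV. if y = v then real (\<xi> y) else 0)"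
        by (rule sum.cong) (auto simp: g_def delta_eq)
      thus ?thesis by simp
    qed
    have agree: "\<forall>\<xi>\<in>Omega_n Lam (Suc m). real (\<xi> v) = (1 / fact m) * (annih ^^ m) g \<xi>"
    proof
      fix \<xi> :: "'v \<Rightarrow> nat" assume "\<xi> \<in> Omega_n Lam (Suc m)"
      hence "npart \<xi> = Suc m" by (simp add: Omega_n_def)
      from annih_pow[OF this, of g] gd[of \<xi>]
      show "real (\<xi> v) = (1 / fact m) * (annih ^^ m) g \<xi>" by simp
    qed
    have hterm: "(gen Lam q ^^ k) (\<lambda>\<eta>. real (\<eta> v)) (phi xs)
        = (\<Sum>j<length xs. (gen Lam q ^^ k) g (delta (xs ! j)))" for k
    proof -
      have "(gen Lam q ^^ k) (\<lambda>\<eta>. real (\<eta> v)) (phi xs)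
          = (gen Lam q ^^ k) (\<lambda>\<eta>. (1 / fact m) * (annih ^^ m) g \<eta>) (phi xs)"
        by (rule genpow_local[OF agree e0])
      also have "\<dots> = (1 / fact m) * (gen Lam q ^^ k) ((annih ^^ m) g) (phi xs)"
        by (simp only: genpow_scale)
      also have "\<dots> = (1 / fact m) * (annih ^^ m) ((gen Lam q ^^ k) g) (phi xs)"
        using comm2[OF cons Lam_down e0O] by simp
      also have "\<dots> = (\<Sum>y\<in>UNIV. real (phi xs y) * (gen Lam q ^^ k) g (delta y))"
        using annih_pow[OF np0] by simp
      also have "\<dots> = (\<Sum>j<length xs. (gen Lam q ^^ k) g (delta (xs ! j)))"
        by (rule phi_sum)
      finally show ?thesis .
    qed
    have "expect Lam q t (\<lambda>\<eta>. real (\<eta> v)) (phi xs)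
        = (\<Sum>k. \<Sum>j<length xs. t^k / fact k * (gen Lam q ^^ k) g (delta (xs ! j)))"
      unfolding expect_def hterm by (simp add: sum_distrib_left)
    also have "\<dots> = (\<Sum>j<length xs. \<Sum>k. t^k / fact k * (gen Lam q ^^ k) g (delta (xs ! j)))"
      by (rule suminf_sum) (rule genpow_summable[OF din])
    also have "\<dots> = (\<Sum>j<length xs. rw_prob Lam q t (xs ! j) v)"
      by (simp add: rw)
    finally show ?thesis .
  qed
qed

end
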